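(* Let $f_\theta(t)=\frac{\pi}{4}-\bigl(\frac{\pi}{4}-\theta_0\bigr)\cos\bigl(\frac{2\pi}{T}t\bigr)$ and $f_r(t)=\frac{\pi}{2}+\bigl(\frac{\pi}{2}-r_0\bigr)\sin\bigl(\frac{2\pi}{T}t\bigr)$. Then: (i) $\theta$ and $f_\theta$ have the same symmetries (both are $T$-periodic, even, symmetric about $t=T/2$, and point-symmetric about $(T/4,\pi/4)$ and $(3T/4,\pi/4)$) and the same critical points, and $\theta'(t)>0$ iff $f_\theta'(t)>0$; (ii) $r$ and $f_r$ have the same symmetries (both are $T$-periodic, symmetric about $t=T/4$ and $t=3T/4$, and point-symmetric about $(0,\pi/2)$ and $(T/2,\pi/2)$) and the same critical points, and $r'(t)>0$ iff $f_r'(t)>0$; (iii) $\cos\alpha(t)$ and $\cos\bigl(\frac{2\pi}{T}t\bigr)$ have the same symmetries and the same critical points and are strictly increasing, respectively strictly decreasing, on the same intervals; (iv) $\sin\alpha(t)$ and $\sin\bigl(\frac{2\pi}{T}t\bigr)$ have the same symmetries and the same critical points and are strictly increasing, respectively strictly decreasing, on the same intervals.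
   Context: Fix an integer $n>1$. Consider the system $r'=\cos\alpha$, $\theta'=\sin\alpha/\sin r$, $\alpha'=(2n-2)\csc r\,\cos\alpha\,\cot(2\theta)-(2n-1)\cot r\,\sin\alpha$. By Carlotto–Schulz, there exist $T>0$ and $r_0\in(0,\pi)$ such that the solution with $\theta(0)=\pi/4$, $r(0)=r_0$, $\alpha(0)=-\pi/2$ satisfies $\theta(T/4)>0$, $r(T/4)=\pi/2$, $\alpha(T/4)=0$, and on $[0,T/4]$ the function $\theta$ is strictly decreasing while $r$ and $\alpha$ are strictly increasing. Moreover (Carlotto–Schulz symmetries) the graph of $\theta$ is symmetric about $t=T/4$ and $t=3T/4$ and point-symmetric about $(T/2,\pi/4)$ and $(0,\pi/4)$; the graph of $r$ is symmetric about $t=0$ and $t=T/2$ and point-symmetric about $(T/4,\pi/2)$ and $(3T/4,\pi/2)$; $\theta,r$ are $T$-periodic and $\alpha(t+T)=\alpha(t)+2\pi$. Now translate this solution by $T/4$ in time (i.e. replace $t$ by $t+T/4$), so that $r(0)=\pi/2$, $\alpha(0)=0$, and $\theta_0:=\theta(0)$ is the minimum of $\theta$, with $0<\theta_0<\pi/4$; then $r_0=r(-T/4)$. All statements refer to this translated solution $(r,\theta,\alpha)$. *)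

theory Defs
  imports "HOL-Analysis.Analysis"
begin

definition f_theta :: "real \<Rightarrow> real \<Rightarrow> real \<Rightarrow> real" where
  "f_theta T theta0 t = pi/4 - (pi/4 - theta0) * cos (2*pi/T * t)"

definition f_r :: "real \<Rightarrow> real \<Rightarrow> real \<Rightarrow> real" where
  "f_r T r0 t = pi/2 + (pi/2 - r0) * sin (2*pi/T * t)"

definition cos_like_sym :: "real \<Rightarrow> real \<Rightarrow> (real \<Rightarrow> real) \<Rightarrow> bool" where
  "cos_like_sym T c g \<longleftrightarrow>
     (\<forall>t. g (t + T) = g t) \<and>
     (\<forall>t. g (- t) = g t) \<and>
     (\<forall>t. g (T - t) = g t) \<and>
     (\<forall>t. g (T/2 - t) = 2*c - g t) \<and>
     (\<forall>t. g (3*T/2 - t) = 2*c - g t)"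

definition sin_like_sym :: "real \<Rightarrow> real \<Rightarrow> (real \<Rightarrow> real) \<Rightarrow> bool" where
  "sin_like_sym T c g \<longleftrightarrow>
     (\<forall>t. g (t + T) = g t) \<and>
     (\<forall>t. g (T/2 - t) = g t) \<and>
     (\<forall>t. g (3*T/2 - t) = g t) \<and>
     (\<forall>t. g (- t) = 2*c - g t) \<and>
     (\<forall>t. g (T - t) = 2*c - g t)"

end

theory Submission
  imports Defs
begin

lemma propagate:
  fixes P :: "real \<Rightarrow> bool" and T :: real
  assumes T: "T > 0"
    and base: "\<And>t. -T/4 \<le> t \<Longrightarrow> t \<le> 0 \<Longrightarrow> P t"
    and neg: "\<And>t. P t \<Longrightarrow> P (-t)" and refl: "\<And>t. P t \<Longrightarrow> P (T/2 - t)"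
    and per1: "\<And>t. P t \<Longrightarrow> P (t + T)" and per2: "\<And>t. P (t + T) \<Longrightarrow> P t"
  shows "P t"
proof -
  have Q: "P s" if sb: "-T/2 \<le> s" "s \<le> T/2" for s
  proof -
    consider "-T/4 \<le> s \<and> s \<le> 0" | "0 \<le> s \<and> s \<le> T/4" | "T/4 \<le> s \<and> s \<le> T/2" | "-T/2 \<le> s \<and> s \<le> -T/4"
      using sb by linarith
    then show ?thesis
    proof cases
      case 1 then show ?thesis using base by auto
    next
      case 2 then have "P (-s)" using base by auto
      then show ?thesis using neg[of "-s"] by simp
    next
      case 3 then have "P (-(T/2 - s))" using base by auto
      then have "P (T/2 - s)" using neg[of "-(T/2 - s)"] by simp
      then show ?thesis using refl[of "T/2 - s"] by simp
    next
      case 4 then have "P (-(T/2 + s))" using base by auto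
      then have "P (T/2 + s)" using neg[of "-(T/2 + s)"] by (simp add: add.commute)
      then have "P (T/2 - (T/2 + s))" using refl by blast
      then have "P (-s)" by simp
      then show ?thesis using neg[of "-s"] by simp
    qed
  qed
  have shift: "P (s + of_int k * T)" if "P s" for s k
  proof (induct k rule: int_induct[where k=0])
    case base then show ?case using that by simp
  next
    case (step1 i)
    have "s + of_int (i + 1) * T = (s + of_int i * T) + T" by (simp add: algebra_simps)
    then show ?case using per1 step1 by metis
  next
    case (step2 i)
    have "s + of_int i * T = (s + of_int (i - 1) * T) + T" by (simp add: algebra_simps)
    then show ?case using per2 step2 by metis
  qed
  define k where "k = floor ((t + T/2)/T)"
  have k1: "of_int k \<le> (t + T/2)/T" and k2: "(t + T/2)/T < of_int k + 1"
    unfolding k_def by linarith+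
  have "of_int k * T \<le> t + T/2" using k1 T by (simp add: pos_le_divide_eq)
  moreover have "t + T/2 < (of_int k + 1) * T" using k2 T by (simp add: pos_divide_less_eq)
  ultimately have "P (t - of_int k * T)" by (intro Q) (auto simp: algebra_simps)
  from shift[OF this, of k] show ?thesis by simp
qed

lemma refl_deriv:
  fixes f D :: "real \<Rightarrow> real"
  assumes d: "\<And>t. (f has_real_derivative D t) (at t)" and s: "\<And>t. f (c - t) = a + b * f t"
  shows "D (c - t) = - (b * D t)"
proof -
  have 1: "((\<lambda>t. f (c - t)) has_real_derivative D (c - t) * (-1)) (at t)"
    by (rule DERIV_chain2[OF d]) (auto intro!: derivative_eq_intros)
  have 2: "((\<lambda>t. a + b * f t) has_real_derivative b * D t) (at t)"
    by (auto intro!: derivative_eq_intros d)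
  have "(\<lambda>t. f (c - t)) = (\<lambda>t. a + b * f t)" using s by auto
  with 1 2 have "D (c - t) * (-1) = b * D t" using DERIV_unique by metis
  then show ?thesis by simp
qed

lemma per_deriv:
  fixes f D :: "real \<Rightarrow> real"
  assumes d: "\<And>t. (f has_real_derivative D t) (at t)" and s: "\<And>t. f (t + T) = f t + a"
  shows "D (t + T) = D t"
proof -
  have 1: "((\<lambda>t. f (t + T)) has_real_derivative D (t + T) * 1) (at t)"
    by (rule DERIV_chain2[OF d]) (auto intro!: derivative_eq_intros)
  have 2: "((\<lambda>t. f t + a) has_real_derivative D t) (at t)"
    by (auto intro!: derivative_eq_intros d)
  have "(\<lambda>t. f (t + T)) = (\<lambda>t. f t + a)" using s by auto
  with 1 2 show ?thesis using DERIV_unique by fastforce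
qed

lemma mono_char:
  fixes F D :: "real \<Rightarrow> real"
  assumes d: "\<And>t. (F has_real_derivative D t) (at t)" and ab: "a < b"
    and nz: "\<And>x y. x < y \<Longrightarrow> \<exists>t\<in>{x<..<y}. D t \<noteq> 0"
  shows "strict_mono_on {a..b} F \<longleftrightarrow> (\<forall>t\<in>{a..b}. D t \<ge> 0)"
proof
  assume sm: "strict_mono_on {a..b} F"
  show "\<forall>t\<in>{a..b}. D t \<ge> 0"
  proof (rule ccontr)
    assume "\<not> ?thesis"
    then obtain t where t: "t \<in> {a..b}" "D t < 0" by force
    show False
    proof (cases "t < b")
      case True
      obtain e where e: "e > 0" "\<forall>h>0. h < e \<longrightarrow> F t > F (t + h)"
        using DERIV_neg_dec_right[OF d t(2)] by blast
      define h where "h = min (e/2) (b - t)"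
      have "h > 0" "h < e" using e True by (auto simp: h_def)
      then have "F t > F (t + h)" using e by auto
      moreover have "t + h \<le> b" unfolding h_def by linarith
      moreover have "F t < F (t + h)"
        using sm[unfolded monotone_on_def, rule_format, of t "t+h"] t \<open>h > 0\<close> \<open>t + h \<le> b\<close> by auto
      ultimately show False by simp
    next
      case False
      then have tb: "t = b" using t by auto
      obtain e where e: "e > 0" "\<forall>h>0. h < e \<longrightarrow> F t < F (t - h)"
        using DERIV_neg_dec_left[OF d t(2)] by blast
      define h where "h = min (e/2) (b - a)"
      have "h > 0" "h < e" using e ab by (auto simp: h_def)
      then have "F t < F (t - h)" using e by auto
      moreover have "a \<le> t - h" unfolding h_def using tb by linarith
      moreover have "F (t - h) < F t"
        using sm[unfolded monotone_on_def, rule_format, of "t - h" t] t \<open>h > 0\<close> \<open>a \<le> t - h\<close> by auto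
      ultimately show False by simp
    qed
  qed
next
  assume nn: "\<forall>t\<in>{a..b}. D t \<ge> 0"
  have inc: "F x \<le> F y" if "a \<le> x" "x \<le> y" "y \<le> b" for x y
  proof (rule DERIV_nonneg_imp_increasing_open[OF that(2)])
    show "\<exists>y. (F has_real_derivative y) (at u) \<and> 0 \<le> y" if "x < u" "u < y" for u
      using d nn that \<open>a \<le> x\<close> \<open>y \<le> b\<close> by force
    show "continuous_on {x..y} F"
      using d by (meson DERIV_isCont continuous_at_imp_continuous_on)
  qed
  show "strict_mono_on {a..b} F"
    unfolding monotone_on_def
  proof (intro ballI impI)
    fix x y assume xy: "x \<in> {a..b}" "y \<in> {a..b}" "x < y"
    obtain t where t: "t \<in> {x<..<y}" "D t \<noteq> 0" using nz[OF xy(3)] by blast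
    have "F x \<le> F y" using inc xy by auto
    moreover have "F x \<noteq> F y"
    proof
      assume eq: "F x = F y"
      have "\<forall>u. \<bar>t - u\<bar> < min (t - x) (y - t) \<longrightarrow> F t = F u"
      proof (intro allI impI)
        fix u assume "\<bar>t - u\<bar> < min (t - x) (y - t)"
        then have u: "x < u" "u < y" by auto
        have "F x \<le> F u" "F u \<le> F y" "F x \<le> F t" "F t \<le> F y"
          using inc u xy t by auto
        then show "F t = F u" using eq by linarith
      qed
      moreover have "min (t - x) (y - t) > 0" using t by auto
      ultimately have "D t = 0" using DERIV_local_const[OF d] by blast
      then show False using t by simp
    qed
    ultimately show "F x < F y" by simp
  qed
qed

lemma antimono_neg: "strict_antimono_on A (F :: real \<Rightarrow> real) \<longleftrightarrow> strict_mono_on A (\<lambda>x. - F x)"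
  unfolding monotone_on_def by auto

lemma sgn_signs: "(x::real) = 0 \<longleftrightarrow> sgn x = 0" "x > 0 \<longleftrightarrow> sgn x = 1" "x \<ge> 0 \<longleftrightarrow> sgn x \<noteq> -1"
  by (auto simp: sgn_if)

lemma transfer:
  fixes F G D S :: "real \<Rightarrow> real" and T a1 a1' a2 a2' b1 b2 :: real
  assumes T: "T > 0"
    and dF: "\<And>t. (F has_real_derivative D t) (at t)"
    and dG: "\<And>t. (G has_real_derivative S t) (at t)"
    and F1: "\<And>t. F (0 - t) = a1 + b1 * F t" and G1: "\<And>t. G (0 - t) = a1' + b1 * G t"
    and F2: "\<And>t. F (T/2 - t) = a2 + b2 * F t" and G2: "\<And>t. G (T/2 - t) = a2' + b2 * G t"
    and F3: "\<And>t. F (t + T) = F t + 0" and G3: "\<And>t. G (t + T) = G t + 0"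
    and b1: "b1 = 1 \<or> b1 = -1" and b2: "b2 = 1 \<or> b2 = -1"
    and base: "\<And>t. -T/4 \<le> t \<Longrightarrow> t \<le> 0 \<Longrightarrow> sgn (D t) = sgn (S t)"
    and nz: "\<And>x y. x < y \<Longrightarrow> \<exists>t\<in>{x<..<y}. S t \<noteq> 0"
  shows "(\<forall>t. deriv F t = 0 \<longleftrightarrow> deriv G t = 0) \<and> (\<forall>t. deriv F t > 0 \<longleftrightarrow> deriv G t > 0) \<and>
    (\<forall>a b. a < b \<longrightarrow> (strict_mono_on {a..b} F \<longleftrightarrow> strict_mono_on {a..b} G) \<and>
       (strict_antimono_on {a..b} F \<longleftrightarrow> strict_antimono_on {a..b} G))"
proof -
  have sg: "sgn (D t) = sgn (S t)" for t
  proof (rule propagate[OF T, where P="\<lambda>t. sgn (D t) = sgn (S t)"])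
    show "sgn (D t) = sgn (S t)" if "-T/4 \<le> t" "t \<le> 0" for t using base that by blast
    show "sgn (D (-t)) = sgn (S (-t))" if "sgn (D t) = sgn (S t)" for t
      using refl_deriv[OF dF F1, of t] refl_deriv[OF dG G1, of t] that b1 by (auto simp: sgn_minus)
    show "sgn (D (T/2 - t)) = sgn (S (T/2 - t))" if "sgn (D t) = sgn (S t)" for t
      using refl_deriv[OF dF F2, of t] refl_deriv[OF dG G2, of t] that b2 by (auto simp: sgn_minus)
    show "sgn (D (t + T)) = sgn (S (t + T))" if "sgn (D t) = sgn (S t)" for t
      using per_deriv[OF dF F3, of t] per_deriv[OF dG G3, of t] that by auto
    show "sgn (D t) = sgn (S t)" if "sgn (D (t + T)) = sgn (S (t + T))" for t
      using per_deriv[OF dF F3, of t] per_deriv[OF dG G3, of t] that by auto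
  qed
  have eqs: "(D t = 0 \<longleftrightarrow> S t = 0) \<and> (D t > 0 \<longleftrightarrow> S t > 0) \<and> (D t \<ge> 0 \<longleftrightarrow> S t \<ge> 0) \<and> (D t \<le> 0 \<longleftrightarrow> S t \<le> 0)" for t
    using sg[of t] by (auto simp: sgn_if split: if_splits)
  have dd: "deriv F t = D t" "deriv G t = S t" for t
    using dF dG DERIV_imp_deriv by blast+
  have nzD: "\<exists>t\<in>{x<..<y}. D t \<noteq> 0" if "x < y" for x y using nz[OF that] eqs by blast
  have nzD': "\<exists>t\<in>{x<..<y}. - D t \<noteq> 0" if "x < y" for x y using nzD[OF that] by simp
  have nzS': "\<exists>t\<in>{x<..<y}. - S t \<noteq> 0" if "x < y" for x y using nz[OF that] by simp
  have dF': "((\<lambda>x. - F x) has_real_derivative - D t) (at t)" for t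
    by (auto intro!: derivative_eq_intros dF)
  have dG': "((\<lambda>x. - G x) has_real_derivative - S t) (at t)" for t
    by (auto intro!: derivative_eq_intros dG)
  show ?thesis
  proof (intro conjI allI impI)
    fix a b :: real assume ab: "a < b"
    show "strict_mono_on {a..b} F \<longleftrightarrow> strict_mono_on {a..b} G"
      using mono_char[OF dF ab nzD] mono_char[OF dG ab nz] eqs by auto
    show "strict_antimono_on {a..b} F \<longleftrightarrow> strict_antimono_on {a..b} G"
      unfolding antimono_neg
      using mono_char[OF dF' ab nzD'] mono_char[OF dG' ab nzS'] eqs by auto
  qed (auto simp: dd eqs)
qed

lemma nz_sin: fixes w c x y :: real assumes "w \<noteq> 0" "c \<noteq> 0" "x < y" shows "\<exists>t\<in>{x<..<y}. c * sin (w * t) * w \<noteq> 0"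
proof (rule ccontr)
  assume "\<not> ?thesis"
  then have z0: "\<And>t. t\<in>{x<..<y} \<Longrightarrow> c * sin (w * t) * w = 0" by blast
  have z: "\<forall>t\<in>{x<..<y}. sin (w * t) = 0"
  proof
    fix t assume "t \<in> {x<..<y}"
    from z0[OF this] show "sin (w * t) = 0" using assms(1,2) by simp
  qed
  define m where "m = (x + y) / 2"
  have d: "((\<lambda>t. sin (w * t)) has_real_derivative cos (w * m) * w) (at m)"
    by (auto intro!: derivative_eq_intros)
  have mi: "m \<in> {x<..<y}" using assms(3) by (auto simp: m_def)
  have ui: "\<forall>u. \<bar>m - u\<bar> < (y - x)/2 \<longrightarrow> u \<in> {x<..<y}" unfolding m_def by (auto simp: abs_less_iff field_simps)
  have "\<forall>u. \<bar>m - u\<bar> < (y - x)/2 \<longrightarrow> sin (w * m) = sin (w * u)"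
    using z mi ui by metis
  then have "cos (w * m) * w = 0" using DERIV_local_const[OF d, of "(y-x)/2"] assms(3) by simp
  then have "cos (w * m) = 0" using assms by simp
  moreover have "sin (w * m) = 0" using z mi by blast
  ultimately show False using sin_cos_squared_add[of "w * m"] by simp
qed

lemma nz_cos: fixes w c x y :: real assumes "w \<noteq> 0" "c \<noteq> 0" "x < y" shows "\<exists>t\<in>{x<..<y}. c * cos (w * t) * w \<noteq> 0"
proof (rule ccontr)
  assume "\<not> ?thesis"
  then have z0: "\<And>t. t\<in>{x<..<y} \<Longrightarrow> c * cos (w * t) * w = 0" by blast
  have z: "\<forall>t\<in>{x<..<y}. cos (w * t) = 0"
  proof
    fix t assume "t \<in> {x<..<y}"
    from z0[OF this] show "cos (w * t) = 0" using assms(1,2) by simp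
  qed
  define m where "m = (x + y) / 2"
  have d: "((\<lambda>t. cos (w * t)) has_real_derivative - sin (w * m) * w) (at m)"
    by (auto intro!: derivative_eq_intros)
  have mi: "m \<in> {x<..<y}" using assms(3) by (auto simp: m_def)
  have ui: "\<forall>u. \<bar>m - u\<bar> < (y - x)/2 \<longrightarrow> u \<in> {x<..<y}" unfolding m_def by (auto simp: abs_less_iff field_simps)
  have "\<forall>u. \<bar>m - u\<bar> < (y - x)/2 \<longrightarrow> cos (w * m) = cos (w * u)"
    using z mi ui by metis
  then have "- sin (w * m) * w = 0" using DERIV_local_const[OF d, of "(y-x)/2"] assms(3) by simp
  then have "sin (w * m) = 0" using assms by simp
  moreover have "cos (w * m) = 0" using z mi by blast
  ultimately show False using sin_cos_squared_add[of "w * m"] by simp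
qed


lemma sin_neg_lt: "-pi/2 \<le> (x::real) \<Longrightarrow> x < 0 \<Longrightarrow> sin x < 0"
  using sin_gt_zero[of "-x"] by simp

lemma sin_neg_le: "-pi/2 \<le> (x::real) \<Longrightarrow> x \<le> 0 \<Longrightarrow> sin x \<le> 0"
  using sin_ge_zero[of "-x"] by simp

lemma cot_pos: "0 < (x::real) \<Longrightarrow> x < pi/2 \<Longrightarrow> cot x > 0"
  unfolding cot_def using cos_gt_zero_pi[of x] sin_gt_zero[of x] by simp

lemma cot_nonneg: "0 < (x::real) \<Longrightarrow> x \<le> pi/2 \<Longrightarrow> cot x \<ge> 0"
  unfolding cot_def using cos_ge_zero[of x] sin_gt_zero[of x] by simp

lemma cos_like_intro:
  assumes "\<And>t. g (t + T) = g t" "\<And>t. g (- t) = g t" "\<And>t. g (T/2 - t) = 2*c - g t"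
  shows "cos_like_sym T c g"
  unfolding cos_like_sym_def
proof (intro conjI allI)
  fix t
  show "g (t + T) = g t" "g (- t) = g t" "g (T/2 - t) = 2*c - g t" using assms by auto
  have "g (T - t) = g (- t + T)" by simp
  also have "\<dots> = g (- t)" by (rule assms(1))
  finally show "g (T - t) = g t" using assms(2) by simp
  have "g (3*T/2 - t) = g ((T/2 - t) + T)" by (simp add: algebra_simps)
  also have "\<dots> = g (T/2 - t)" by (rule assms(1))
  finally show "g (3*T/2 - t) = 2*c - g t" using assms(3) by simp
qed

lemma sin_like_intro:
  assumes "\<And>t. g (t + T) = g t" "\<And>t. g (- t) = 2*c - g t" "\<And>t. g (T/2 - t) = g t"
  shows "sin_like_sym T c g"
  unfolding sin_like_sym_def
proof (intro conjI allI)
  fix t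
  show "g (t + T) = g t" "g (- t) = 2*c - g t" "g (T/2 - t) = g t" using assms by auto
  have "g (T - t) = g (- t + T)" by simp
  also have "\<dots> = g (- t)" by (rule assms(1))
  finally show "g (T - t) = 2*c - g t" using assms(2) by simp
  have "g (3*T/2 - t) = g ((T/2 - t) + T)" by (simp add: algebra_simps)
  also have "\<dots> = g (T/2 - t)" by (rule assms(1))
  finally show "g (3*T/2 - t) = g t" using assms(3) by simp
qed

theorem mainTheorem3:
  fixes n :: nat and T r0 theta0 :: real and r theta alpha :: "real \<Rightarrow> real"
  assumes n: "n > 1"
    and T: "T > 0"
    and r0: "0 < r0" "r0 < pi"
    \<comment> \<open>the ODE system\<close>
    and ode_r: "\<And>t. (r has_real_derivative cos (alpha t)) (at t)"
    and ode_theta: "\<And>t. (theta has_real_derivative sin (alpha t) / sin (r t)) (at t)"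
    and ode_alpha: "\<And>t. (alpha has_real_derivative
            (2 * real n - 2) * (1 / sin (r t)) * cos (alpha t) * cot (2 * theta t)
          - (2 * real n - 1) * cot (r t) * sin (alpha t)) (at t)"
    \<comment> \<open>Carlotto--Schulz data, translated by T/4\<close>
    and init1: "theta (-T/4) = pi/4" "r (-T/4) = r0" "alpha (-T/4) = - pi/2"
    and init2: "theta 0 > 0" "r 0 = pi/2" "alpha 0 = 0"
    and mon: "strict_antimono_on {-T/4..0} theta" "strict_mono_on {-T/4..0} r"
             "strict_mono_on {-T/4..0} alpha"
    and sym_theta: "\<And>t. theta (- t) = theta t" "\<And>t. theta (T - t) = theta t"
                   "\<And>t. theta (T/2 - t) = pi/2 - theta t"
                   "\<And>t. theta (- T/2 - t) = pi/2 - theta t"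
    and sym_r: "\<And>t. r (- T/2 - t) = r t" "\<And>t. r (T/2 - t) = r t"
               "\<And>t. r (- t) = pi - r t" "\<And>t. r (T - t) = pi - r t"
    and per: "\<And>t. theta (t + T) = theta t" "\<And>t. r (t + T) = r t"
             "\<And>t. alpha (t + T) = alpha t + 2*pi"
    and theta0: "theta0 = theta 0" "\<And>t. theta0 \<le> theta t" "0 < theta0" "theta0 < pi/4"
  shows
    \<comment> \<open>(i)\<close>
    "(cos_like_sym T (pi/4) theta \<and> cos_like_sym T (pi/4) (f_theta T theta0) \<and>
     (\<forall>t. deriv theta t = 0 \<longleftrightarrow> deriv (f_theta T theta0) t = 0) \<and>
     (\<forall>t. deriv theta t > 0 \<longleftrightarrow> deriv (f_theta T theta0) t > 0))
     \<and>
    \<comment> \<open>(ii)\<close>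
    (sin_like_sym T (pi/2) r \<and> sin_like_sym T (pi/2) (f_r T r0) \<and>
     (\<forall>t. deriv r t = 0 \<longleftrightarrow> deriv (f_r T r0) t = 0) \<and>
     (\<forall>t. deriv r t > 0 \<longleftrightarrow> deriv (f_r T r0) t > 0))
     \<and>
    \<comment> \<open>(iii)\<close>
    (cos_like_sym T 0 (\<lambda>t. cos (alpha t)) \<and> cos_like_sym T 0 (\<lambda>t. cos (2*pi/T * t)) \<and>
     (\<forall>t. deriv (\<lambda>t. cos (alpha t)) t = 0 \<longleftrightarrow> deriv (\<lambda>t. cos (2*pi/T * t)) t = 0) \<and>
     (\<forall>a b. a < b \<longrightarrow>
        (strict_mono_on {a..b} (\<lambda>t. cos (alpha t)) \<longleftrightarrow>
         strict_mono_on {a..b} (\<lambda>t. cos (2*pi/T * t))) \<and>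
        (strict_antimono_on {a..b} (\<lambda>t. cos (alpha t)) \<longleftrightarrow>
         strict_antimono_on {a..b} (\<lambda>t. cos (2*pi/T * t)))))
     \<and>
    \<comment> \<open>(iv)\<close>
    (sin_like_sym T 0 (\<lambda>t. sin (alpha t)) \<and> sin_like_sym T 0 (\<lambda>t. sin (2*pi/T * t)) \<and>
     (\<forall>t. deriv (\<lambda>t. sin (alpha t)) t = 0 \<longleftrightarrow> deriv (\<lambda>t. sin (2*pi/T * t)) t = 0) \<and>
     (\<forall>a b. a < b \<longrightarrow>
        (strict_mono_on {a..b} (\<lambda>t. sin (alpha t)) \<longleftrightarrow>
         strict_mono_on {a..b} (\<lambda>t. sin (2*pi/T * t))) \<and>
        (strict_antimono_on {a..b} (\<lambda>t. sin (alpha t)) \<longleftrightarrow>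
         strict_antimono_on {a..b} (\<lambda>t. sin (2*pi/T * t)))))"
proof -
  define A where "A t = (2 * real n - 2) * (1 / sin (r t)) * cos (alpha t) * cot (2 * theta t)
          - (2 * real n - 1) * cot (r t) * sin (alpha t)" for t
  have dA: "(alpha has_real_derivative A t) (at t)" for t unfolding A_def by (rule ode_alpha)
  have Tne: "T \<noteq> 0" using T by simp
  have wne: "2*pi/T \<noteq> 0" using T by simp
  have w1: "2*pi/T * (t + T) = 2*pi/T*t + 2*pi" for t using Tne by (simp add: field_simps)
  have w2: "2*pi/T * (- t) = - (2*pi/T*t)" for t by simp
  have w3: "2*pi/T * (T/2 - t) = pi - 2*pi/T*t" for t using Tne by (simp add: field_simps)
  have base_r: "r0 \<le> r t \<and> r t \<le> pi/2 \<and> (t < 0 \<longrightarrow> r t < pi/2)" if "-T/4 \<le> t" "t \<le> 0" for t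
  proof -
    have "r (-T/4) \<le> r t"
    proof (cases "t = -T/4")
      case False
      then show ?thesis using mon(2)[unfolded monotone_on_def, rule_format, of "-T/4" t] that T by auto
    qed simp
    moreover have "t < 0 \<longrightarrow> r t < r 0" using mon(2) that T by (auto simp: monotone_on_def)
    ultimately show ?thesis using init1 init2 that by force
  qed
  have base_a: "-pi/2 \<le> alpha t \<and> alpha t \<le> 0 \<and> (t < 0 \<longrightarrow> alpha t < 0) \<and> (-T/4 < t \<longrightarrow> -pi/2 < alpha t)"
    if "-T/4 \<le> t" "t \<le> 0" for t
  proof -
    have "t < 0 \<longrightarrow> alpha t < alpha 0" using mon(3) that T by (auto simp: monotone_on_def)
    moreover have "-T/4 < t \<longrightarrow> alpha (-T/4) < alpha t" using mon(3) that T by (auto simp: monotone_on_def)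
    ultimately show ?thesis using init1 init2 that by force
  qed
  have base_th: "theta0 \<le> theta t \<and> theta t \<le> pi/4" if "-T/4 \<le> t" "t \<le> 0" for t
  proof -
    have "theta t \<le> theta (-T/4)"
    proof (cases "t = -T/4")
      case False
      then show ?thesis using mon(1)[unfolded monotone_on_def, rule_format, of "-T/4" t] that T by auto
    qed simp
    then show ?thesis using init1 theta0 by auto
  qed
  have r0lt: "r0 < pi/2"
  proof -
    have "r (-T/4) < r 0" using mon(2) T by (auto simp: monotone_on_def)
    then show ?thesis using init1 init2 by simp
  qed
  have rbnd: "0 < r t \<and> r t < pi" for t
  proof (rule propagate[OF T, where P="\<lambda>t. 0 < r t \<and> r t < pi"])
    show "0 < r t \<and> r t < pi" if "-T/4 \<le> t" "t \<le> 0" for t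
      using base_r[OF that] r0 r0lt by auto
    show "0 < r (-t) \<and> r (-t) < pi" if "0 < r t \<and> r t < pi" for t using that sym_r(3)[of t] by auto
    show "0 < r (T/2-t) \<and> r (T/2-t) < pi" if "0 < r t \<and> r t < pi" for t using that sym_r(2)[of t] by auto
    show "0 < r (t+T) \<and> r (t+T) < pi" if "0 < r t \<and> r t < pi" for t using that per(2)[of t] by auto
    show "0 < r t \<and> r t < pi" if "0 < r (t+T) \<and> r (t+T) < pi" for t using that per(2)[of t] by auto
  qed
  have sinr: "sin (r t) > 0" for t using rbnd[of t] sin_gt_zero by blast
  have Apos: "A t > 0" if "-T/4 \<le> t" "t \<le> 0" for t
  proof -
    note br = base_r[OF that] and ba = base_a[OF that] and bt = base_th[OF that]
    have n2: "2 * real n - 2 > 0" "2 * real n - 1 > 0" using n by auto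
    have c1: "cos (alpha t) \<ge> 0" using ba by (intro cos_ge_zero) auto
    have "0 < 2 * theta t" "2 * theta t \<le> pi/2" using bt theta0(3) by linarith+
    then have c2: "cot (2 * theta t) \<ge> 0" by (rule cot_nonneg)
    have c3: "cot (r t) \<ge> 0" using br r0 by (intro cot_nonneg) auto
    have c4: "sin (alpha t) \<le> 0" using ba by (intro sin_neg_le) auto
    have t1: "(2 * real n - 2) * (1 / sin (r t)) * cos (alpha t) * cot (2 * theta t) \<ge> 0"
      using n2 sinr[of t] c1 c2 by simp
    have t2: "- ((2 * real n - 1) * cot (r t) * sin (alpha t)) \<ge> 0"
      using n2 c3 c4 by (simp add: mult_nonneg_nonpos)
    show ?thesis
    proof (cases "t < 0")
      case True
      have "cot (r t) > 0" using br r0 True by (intro cot_pos) auto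
      moreover have "sin (alpha t) < 0" using ba True by (intro sin_neg_lt) auto
      ultimately have "- ((2 * real n - 1) * cot (r t) * sin (alpha t)) > 0"
        using n2 by (simp add: mult_pos_neg)
      then show ?thesis using t1 unfolding A_def by linarith
    next
      case False
      then have t0: "t = 0" using that by simp
      have "cot (2 * theta0) > 0" using theta0 by (intro cot_pos) auto
      then have "(2 * real n - 2) * (1 / sin (r t)) * cos (alpha t) * cot (2 * theta t) > 0"
        using n2 sinr[of 0] t0 init2(3) theta0(1) by (intro mult_pos_pos) auto
      then show ?thesis using t2 unfolding A_def by linarith
    qed
  qed
  have base_w: "-pi/2 \<le> 2*pi/T*t \<and> 2*pi/T*t \<le> 0 \<and> (t < 0 \<longrightarrow> 2*pi/T*t < 0) \<and> (-T/4 < t \<longrightarrow> -pi/2 < 2*pi/T*t)"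
    if "-T/4 \<le> t" "t \<le> 0" for t
  proof -
    have e: "2*pi/T*t = (2*pi)*(t/T)" by simp
    have u1: "-1/4 \<le> t/T" "t/T \<le> 0" using that T by (auto simp: field_simps)
    have u2: "t < 0 \<Longrightarrow> t/T < 0" "-T/4 < t \<Longrightarrow> -1/4 < t/T" using that T by (auto simp: field_simps)
    have p: "2*pi > 0" by simp
    have "(2*pi)*(-1/4) \<le> (2*pi)*(t/T)" using u1 p by (intro mult_left_mono) auto
    moreover have "(2*pi)*(t/T) \<le> 0" using u1 p by (intro mult_nonneg_nonpos) auto
    moreover have "t < 0 \<Longrightarrow> (2*pi)*(t/T) < 0" using u2 p by (intro mult_pos_neg) auto
    moreover have "-T/4 < t \<Longrightarrow> (2*pi)*(-1/4) < (2*pi)*(t/T)" using u2 p by (intro mult_strict_left_mono) auto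
    ultimately show ?thesis unfolding e by auto
  qed
  have wpos: "2*pi/T > 0" using T by simp
  have wq: "2*pi/T*(-T/4) = -pi/2" using Tne by (simp add: field_simps)
  have dca: "((\<lambda>t. cos (alpha t)) has_real_derivative - sin (alpha t) * A t) (at t)" for t
    by (rule DERIV_chain2[OF DERIV_cos dA])
  have dsa: "((\<lambda>t. sin (alpha t)) has_real_derivative cos (alpha t) * A t) (at t)" for t
    by (rule DERIV_chain2[OF DERIV_sin dA])
  have fth: "f_theta T theta0 = (\<lambda>t. pi/4 - (pi/4 - theta0) * cos (2*pi/T*t))"
    by (rule ext) (simp add: f_theta_def)
  have ffr: "f_r T r0 = (\<lambda>t. pi/2 + (pi/2 - r0) * sin (2*pi/T*t))"
    by (rule ext) (simp add: f_r_def)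
  have dfth: "(f_theta T theta0 has_real_derivative (pi/4 - theta0) * sin (2*pi/T*t) * (2*pi/T)) (at t)" for t
    unfolding fth using Tne by (auto intro!: derivative_eq_intros)
  have dfr: "(f_r T r0 has_real_derivative (pi/2 - r0) * cos (2*pi/T*t) * (2*pi/T)) (at t)" for t
    unfolding ffr using Tne by (auto intro!: derivative_eq_intros)
  have dcw: "((\<lambda>t. cos (2*pi/T*t)) has_real_derivative (-1) * sin (2*pi/T*t) * (2*pi/T)) (at t)" for t
    using Tne by (auto intro!: derivative_eq_intros)
  have dsw: "((\<lambda>t. sin (2*pi/T*t)) has_real_derivative 1 * cos (2*pi/T*t) * (2*pi/T)) (at t)" for t
    using Tne by (auto intro!: derivative_eq_intros)
  have TH1: "theta (0 - t) = 0 + 1 * theta t" for t using sym_theta(1) by simp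
  have TH2: "theta (T/2 - t) = pi/2 + (-1) * theta t" for t using sym_theta(3) by simp
  have TH3: "theta (t + T) = theta t + 0" for t using per(1) by simp
  have FT1: "f_theta T theta0 (0 - t) = 0 + 1 * f_theta T theta0 t" for t by (simp add: fth)
  have FT2: "f_theta T theta0 (T/2 - t) = pi/2 + (-1) * f_theta T theta0 t" for t by (simp only: fth w3) simp
  have FT3: "f_theta T theta0 (t + T) = f_theta T theta0 t + 0" for t by (simp only: fth w1) simp
  have R1: "r (0 - t) = pi + (-1) * r t" for t using sym_r(3) by simp
  have R2: "r (T/2 - t) = 0 + 1 * r t" for t using sym_r(2) by simp
  have R3: "r (t + T) = r t + 0" for t using per(2) by simp
  have FR1: "f_r T r0 (0 - t) = pi + (-1) * f_r T r0 t" for t by (simp add: ffr)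
  have FR2: "f_r T r0 (T/2 - t) = 0 + 1 * f_r T r0 t" for t by (simp only: ffr w3) simp
  have FR3: "f_r T r0 (t + T) = f_r T r0 t + 0" for t by (simp only: ffr w1) simp
  have CA1: "cos (alpha (0 - t)) = 0 + 1 * cos (alpha t)" for t
    using refl_deriv[where D="\<lambda>t. cos (alpha t)", OF ode_r R1, of t] by simp
  have CA2: "cos (alpha (T/2 - t)) = 0 + (-1) * cos (alpha t)" for t
    using refl_deriv[where D="\<lambda>t. cos (alpha t)", OF ode_r R2, of t] by simp
  have CA3: "cos (alpha (t + T)) = cos (alpha t) + 0" for t using per(3)[of t] by simp
  define Dth where "Dth t = sin (alpha t) / sin (r t)" for t
  have sa: "sin (alpha t) = Dth t * sin (r t)" for t using sinr[of t] by (simp add: Dth_def)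
  have Dth1: "Dth (0 - t) = - Dth t" for t
    using refl_deriv[where D="Dth", OF ode_theta[unfolded Dth_def[symmetric]] TH1, of t] by simp
  have Dth2: "Dth (T/2 - t) = Dth t" for t
    using refl_deriv[where D="Dth", OF ode_theta[unfolded Dth_def[symmetric]] TH2, of t] by simp
  have SA1: "sin (alpha (0 - t)) = 0 + (-1) * sin (alpha t)" for t
    using sa[of "0 - t"] sa[of t] Dth1[of t] R1[of t] by simp
  have SA2: "sin (alpha (T/2 - t)) = 0 + 1 * sin (alpha t)" for t
    using sa[of "T/2 - t"] sa[of t] Dth2[of t] R2[of t] by simp
  have SA3: "sin (alpha (t + T)) = sin (alpha t) + 0" for t using per(3)[of t] by simp
  have C1: "cos (2*pi/T*(0 - t)) = 0 + 1 * cos (2*pi/T*t)" for t by simp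
  have C2: "cos (2*pi/T*(T/2 - t)) = 0 + (-1) * cos (2*pi/T*t)" for t by (simp only: w3) simp
  have C3: "cos (2*pi/T*(t + T)) = cos (2*pi/T*t) + 0" for t by (simp only: w1) simp
  have S1: "sin (2*pi/T*(0 - t)) = 0 + (-1) * sin (2*pi/T*t)" for t by simp
  have S2: "sin (2*pi/T*(T/2 - t)) = 0 + 1 * sin (2*pi/T*t)" for t by (simp only: w3) simp
  have S3: "sin (2*pi/T*(t + T)) = sin (2*pi/T*t) + 0" for t by (simp only: w1) simp
  have c_th: "pi/4 - theta0 > 0" using theta0 by simp
  have c_r: "pi/2 - r0 > 0" using r0lt by simp
  have bI: "sgn (sin (alpha t) / sin (r t)) = sgn ((pi/4 - theta0) * sin (2*pi/T*t) * (2*pi/T))"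
    if "-T/4 \<le> t" "t \<le> 0" for t
  proof (cases "t < 0")
    case True
    have "sin (alpha t) < 0" using base_a[OF that] True by (intro sin_neg_lt) auto
    then have a: "sin (alpha t) / sin (r t) < 0" using sinr[of t] by (simp add: divide_neg_pos)
    have sw: "sin (2*pi/T*t) < 0" using base_w[OF that] True by (intro sin_neg_lt) auto
    have b: "(pi/4 - theta0) * sin (2*pi/T*t) * (2*pi/T) < 0"
      by (rule mult_neg_pos[OF mult_pos_neg[OF c_th sw] wpos])
    show ?thesis using a b by (metis sgn_neg sgn_pos)
  next
    case False
    then have "t = 0" using that by simp
    then show ?thesis using init2 by simp
  qed
  have bII: "sgn (cos (alpha t)) = sgn ((pi/2 - r0) * cos (2*pi/T*t) * (2*pi/T))"
    if "-T/4 \<le> t" "t \<le> 0" for t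
  proof (cases "-T/4 < t")
    case True
    have a: "cos (alpha t) > 0" using base_a[OF that] True by (intro cos_gt_zero_pi) auto
    have cw: "cos (2*pi/T*t) > 0" using base_w[OF that] True by (intro cos_gt_zero_pi) auto
    have b: "(pi/2 - r0) * cos (2*pi/T*t) * (2*pi/T) > 0" by (rule mult_pos_pos[OF mult_pos_pos[OF c_r cw] wpos])
    show ?thesis using a b by (metis sgn_neg sgn_pos)
  next
    case False
    then have "t = -T/4" using that by simp
    then show ?thesis using init1 wq by simp
  qed
  have bIII: "sgn (- sin (alpha t) * A t) = sgn ((-1) * sin (2*pi/T*t) * (2*pi/T))"
    if "-T/4 \<le> t" "t \<le> 0" for t
  proof (cases "t < 0")
    case True
    have "sin (alpha t) < 0" using base_a[OF that] True by (intro sin_neg_lt) auto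
    then have sa0: "- sin (alpha t) > 0" by simp
    have a: "- sin (alpha t) * A t > 0" by (rule mult_pos_pos[OF sa0 Apos[OF that]])
    have "sin (2*pi/T*t) < 0" using base_w[OF that] True by (intro sin_neg_lt) auto
    then have sw: "(-1) * sin (2*pi/T*t) > 0" by simp
    have b: "(-1) * sin (2*pi/T*t) * (2*pi/T) > 0" by (rule mult_pos_pos[OF sw wpos])
    show ?thesis using a b by (metis sgn_neg sgn_pos)
  next
    case False
    then have "t = 0" using that by simp
    then show ?thesis using init2 by simp
  qed
  have bIV: "sgn (cos (alpha t) * A t) = sgn (1 * cos (2*pi/T*t) * (2*pi/T))"
    if "-T/4 \<le> t" "t \<le> 0" for t
  proof (cases "-T/4 < t")
    case True
    have a: "cos (alpha t) > 0" using base_a[OF that] True by (intro cos_gt_zero_pi) auto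
    then have a: "cos (alpha t) * A t > 0" by (rule mult_pos_pos[OF _ Apos[OF that]])
    have "cos (2*pi/T*t) > 0" using base_w[OF that] True by (intro cos_gt_zero_pi) auto
    then have cw: "1 * cos (2*pi/T*t) > 0" by simp
    have b: "1 * cos (2*pi/T*t) * (2*pi/T) > 0" by (rule mult_pos_pos[OF cw wpos])
    show ?thesis using a b by (metis sgn_neg sgn_pos)
  next
    case False
    then have "t = -T/4" using that by simp
    then show ?thesis using init1 wq by simp
  qed
  have PI: "(\<forall>t. deriv theta t = 0 \<longleftrightarrow> deriv (f_theta T theta0) t = 0) \<and>
     (\<forall>t. deriv theta t > 0 \<longleftrightarrow> deriv (f_theta T theta0) t > 0) \<and>
    (\<forall>a b. a < b \<longrightarrow> (strict_mono_on {a..b} theta \<longleftrightarrow> strict_mono_on {a..b} (f_theta T theta0)) \<and>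
       (strict_antimono_on {a..b} theta \<longleftrightarrow> strict_antimono_on {a..b} (f_theta T theta0)))"
    by (rule transfer[where D="\<lambda>t. sin (alpha t) / sin (r t)"
          and S="\<lambda>t. (pi/4 - theta0) * sin (2*pi/T*t) * (2*pi/T)",
          OF T ode_theta dfth TH1 FT1 TH2 FT2 TH3 FT3 _ _ bI nz_sin[OF wne]])
      (use c_th in auto)
  have PII: "(\<forall>t. deriv r t = 0 \<longleftrightarrow> deriv (f_r T r0) t = 0) \<and>
     (\<forall>t. deriv r t > 0 \<longleftrightarrow> deriv (f_r T r0) t > 0) \<and>
    (\<forall>a b. a < b \<longrightarrow> (strict_mono_on {a..b} r \<longleftrightarrow> strict_mono_on {a..b} (f_r T r0)) \<and>
       (strict_antimono_on {a..b} r \<longleftrightarrow> strict_antimono_on {a..b} (f_r T r0)))"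
    by (rule transfer[where D="\<lambda>t. cos (alpha t)"
          and S="\<lambda>t. (pi/2 - r0) * cos (2*pi/T*t) * (2*pi/T)",
          OF T ode_r dfr R1 FR1 R2 FR2 R3 FR3 _ _ bII nz_cos[OF wne]])
      (use c_r in auto)
  have PIII: "(\<forall>t. deriv (\<lambda>t. cos (alpha t)) t = 0 \<longleftrightarrow> deriv (\<lambda>t. cos (2*pi/T * t)) t = 0) \<and>
     (\<forall>t. deriv (\<lambda>t. cos (alpha t)) t > 0 \<longleftrightarrow> deriv (\<lambda>t. cos (2*pi/T * t)) t > 0) \<and>
    (\<forall>a b. a < b \<longrightarrow>
        (strict_mono_on {a..b} (\<lambda>t. cos (alpha t)) \<longleftrightarrow>
         strict_mono_on {a..b} (\<lambda>t. cos (2*pi/T * t))) \<and>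
        (strict_antimono_on {a..b} (\<lambda>t. cos (alpha t)) \<longleftrightarrow>
         strict_antimono_on {a..b} (\<lambda>t. cos (2*pi/T * t))))"
    by (rule transfer[where D="\<lambda>t. - sin (alpha t) * A t"
          and S="\<lambda>t. (-1) * sin (2*pi/T*t) * (2*pi/T)",
          OF T dca dcw CA1 C1 CA2 C2 CA3 C3 _ _ bIII nz_sin[OF wne]]) auto
  have PIV: "(\<forall>t. deriv (\<lambda>t. sin (alpha t)) t = 0 \<longleftrightarrow> deriv (\<lambda>t. sin (2*pi/T * t)) t = 0) \<and>
     (\<forall>t. deriv (\<lambda>t. sin (alpha t)) t > 0 \<longleftrightarrow> deriv (\<lambda>t. sin (2*pi/T * t)) t > 0) \<and>
    (\<forall>a b. a < b \<longrightarrow>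
        (strict_mono_on {a..b} (\<lambda>t. sin (alpha t)) \<longleftrightarrow>
         strict_mono_on {a..b} (\<lambda>t. sin (2*pi/T * t))) \<and>
        (strict_antimono_on {a..b} (\<lambda>t. sin (alpha t)) \<longleftrightarrow>
         strict_antimono_on {a..b} (\<lambda>t. sin (2*pi/T * t))))"
    by (rule transfer[where D="\<lambda>t. cos (alpha t) * A t"
          and S="\<lambda>t. 1 * cos (2*pi/T*t) * (2*pi/T)",
          OF T dsa dsw SA1 S1 SA2 S2 SA3 S3 _ _ bIV nz_cos[OF wne]]) auto
  have Y1: "cos_like_sym T (pi/4) theta"
    by (rule cos_like_intro) (use TH1 TH2 TH3 in \<open>simp_all\<close>)
  have Y2: "cos_like_sym T (pi/4) (f_theta T theta0)"
    by (rule cos_like_intro) (use FT1 FT2 FT3 in \<open>simp_all\<close>)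
  have Y3: "sin_like_sym T (pi/2) r"
    by (rule sin_like_intro) (use R1 R2 R3 in \<open>simp_all\<close>)
  have Y4: "sin_like_sym T (pi/2) (f_r T r0)"
    by (rule sin_like_intro) (use FR1 FR2 FR3 in \<open>simp_all\<close>)
  have Y5: "cos_like_sym T 0 (\<lambda>t. cos (alpha t))"
    by (rule cos_like_intro) (use CA1 CA2 CA3 in \<open>simp_all\<close>)
  have Y6: "cos_like_sym T 0 (\<lambda>t. cos (2*pi/T * t))"
    by (rule cos_like_intro) (use C1 C2 C3 in \<open>simp_all\<close>)
  have Y7: "sin_like_sym T 0 (\<lambda>t. sin (alpha t))"
    by (rule sin_like_intro) (use SA1 SA2 SA3 in \<open>simp_all\<close>)
  have Y8: "sin_like_sym T 0 (\<lambda>t. sin (2*pi/T * t))"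
    by (rule sin_like_intro) (use S1 S2 S3 in \<open>simp_all\<close>)
  show ?thesis
    by (rule conjI[OF conjI[OF Y1 conjI[OF Y2 conjI[OF conjunct1[OF PI] conjunct1[OF conjunct2[OF PI]]]]]
        conjI[OF conjI[OF Y3 conjI[OF Y4 conjI[OF conjunct1[OF PII] conjunct1[OF conjunct2[OF PII]]]]]
        conjI[OF conjI[OF Y5 conjI[OF Y6 conjI[OF conjunct1[OF PIII] conjunct2[OF conjunct2[OF PIII]]]]]
                 conjI[OF Y7 conjI[OF Y8 conjI[OF conjunct1[OF PIV] conjunct2[OF conjunct2[OF PIV]]]]]]]])
qed
end
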